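(* Let $G$ be a perfect matching on $n=pq$ vertices $u_iw_j$ ($1\le i\le p$, $1\le j\le q$; $n$ even). Then $\Delta(G)=\Delta(G^{\Gamma_B})$ if and only if $G^{\Gamma_B}$ is a perfect matching. Moreover, if this holds, then the subgraph $G_2$ of $G$ consisting of its entangled edges and the subgraph $G_4$ of $G^{\Gamma_B}$ consisting of its entangled edges have the same set of non-isolated vertices, i.e. both are perfect entangling matchings on the same vertex subset. In particular, a perfect entangling matching $G$ on these vertices satisfies $\Delta(G)=\Delta(G^{\Gamma_B})$ iff $G^{\Gamma_B}$ is also a perfect entangling matching.
   Context: A perfect matching is a simple graph in which every vertex lies in exactly one edge. An edge $\{u_iw_j,u_{i'}w_{j'}\}$ is entangled if $i\ne i'$ and $j\ne j'$, and unentangled otherwise. A perfect entangling matching (on a vertex set) is a perfect matching all of whose edges are entangled. $\Delta(G)$ denotes the diagonal degree matrix. The partial transpose $G^{\Gamma_B}$ has the same vertex set, and $\{u_iw_j,u_kw_l\}$ is an edge of $G^{\Gamma_B}$ iff $\{u_iw_l,u_kw_j\}$ is an edge of $G$. *)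

theory Defs
  imports Main
begin

text \<open>Vertices u_i w_j are encoded as pairs (i,j) with 1 <= i <= p, 1 <= j <= q.
  A graph is given by its edge relation E (symmetric, irreflexive, inside the vertex set).\<close>

type_synonym vtx = "nat \<times> nat"
type_synonym graph = "vtx \<Rightarrow> vtx \<Rightarrow> bool"

definition verts :: "nat \<Rightarrow> nat \<Rightarrow> vtx set" where
  "verts p q = {1..p} \<times> {1..q}"

definition simple_graph :: "vtx set \<Rightarrow> graph \<Rightarrow> bool" where
  "simple_graph V E \<longleftrightarrow>
     (\<forall>v w. E v w \<longrightarrow> v \<in> V \<and> w \<in> V \<and> v \<noteq> w \<and> E w v)"

definition perfect_matching :: "vtx set \<Rightarrow> graph \<Rightarrow> bool" where
  "perfect_matching V E \<longleftrightarrow> simple_graph V E \<and> (\<forall>v\<in>V. \<exists>!w. E v w)"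

definition entangled :: "vtx \<Rightarrow> vtx \<Rightarrow> bool" where
  "entangled v w \<longleftrightarrow> fst v \<noteq> fst w \<and> snd v \<noteq> snd w"

definition perfect_entangling_matching :: "vtx set \<Rightarrow> graph \<Rightarrow> bool" where
  "perfect_entangling_matching V E \<longleftrightarrow>
     perfect_matching V E \<and> (\<forall>v w. E v w \<longrightarrow> entangled v w)"

definition partial_transpose :: "graph \<Rightarrow> graph" where
  "partial_transpose E = (\<lambda>(i, j) (k, l). E (i, l) (k, j))"

definition degree :: "vtx set \<Rightarrow> graph \<Rightarrow> vtx \<Rightarrow> nat" where
  "degree V E v = card {w \<in> V. E v w}"

definition degree_matrix :: "vtx set \<Rightarrow> graph \<Rightarrow> vtx \<Rightarrow> vtx \<Rightarrow> nat" where
  "degree_matrix V E v w = (if v \<in> V \<and> w \<in> V \<and> v = w then degree V E v else 0)"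

definition entangled_part :: "graph \<Rightarrow> graph" where
  "entangled_part E = (\<lambda>v w. E v w \<and> entangled v w)"

definition non_isolated :: "vtx set \<Rightarrow> graph \<Rightarrow> vtx set" where
  "non_isolated V E = {v \<in> V. \<exists>w. E v w}"

end

theory Submission
  imports Defs
begin

lemma pt_simple:
  assumes "simple_graph (verts p q) G"
  shows "simple_graph (verts p q) (partial_transpose G)"
  using assms unfolding simple_graph_def partial_transpose_def verts_def
  by fastforce

lemma pt_pt: "partial_transpose (partial_transpose G) = G"
  unfolding partial_transpose_def by (auto simp: fun_eq_iff)

lemma deg1_iff:
  assumes "simple_graph V E"
  shows "degree V E v = 1 \<longleftrightarrow> (\<exists>!w. E v w)"
proof -
  have eq: "{w \<in> V. E v w} = {w. E v w}" using assms unfolding simple_graph_def by blast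
  have "card {w. E v w} = 1 \<longleftrightarrow> (\<exists>x. {w. E v w} = {x})"
    using card_1_singleton_iff[of "{w. E v w}"] by (simp only: One_nat_def)
  also have "\<dots> \<longleftrightarrow> (\<exists>!w. E v w)"
  proof
    assume "\<exists>x. {w. E v w} = {x}"
    then obtain x where "{w. E v w} = {x}" by blast
    then have "\<And>w. E v w \<longleftrightarrow> w = x" by (metis mem_Collect_eq singleton_iff)
    then show "\<exists>!w. E v w" by auto
  next
    assume "\<exists>!w. E v w"
    then obtain x where "\<And>w. E v w \<longleftrightarrow> w = x" by metis
    then have "{w. E v w} = {x}" by auto
    then show "\<exists>x. {w. E v w} = {x}" by blast
  qed
  finally show ?thesis unfolding degree_def eq .
qed

lemma dm_eq:
  "degree_matrix V G = degree_matrix V H \<longleftrightarrow> (\<forall>v\<in>V. degree V G v = degree V H v)"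
proof
  assume "degree_matrix V G = degree_matrix V H"
  then show "\<forall>v\<in>V. degree V G v = degree V H v"
    unfolding degree_matrix_def fun_eq_iff by (metis (full_types))
next
  assume "\<forall>v\<in>V. degree V G v = degree V H v"
  then show "degree_matrix V G = degree_matrix V H"
    unfolding degree_matrix_def fun_eq_iff by auto
qed

lemma part1:
  assumes "perfect_matching (verts p q) G"
  shows "degree_matrix (verts p q) G = degree_matrix (verts p q) (partial_transpose G)
            \<longleftrightarrow> perfect_matching (verts p q) (partial_transpose G)"
proof -
  have sG: "simple_graph (verts p q) G" using assms perfect_matching_def by blast
  have sH: "simple_graph (verts p q) (partial_transpose G)" using pt_simple[OF sG] .
  have dG: "\<forall>v\<in>verts p q. degree (verts p q) G v = 1"
  proof
    fix v assume "v \<in> verts p q"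
    then have "\<exists>!w. G v w" using assms unfolding perfect_matching_def by blast
    then show "degree (verts p q) G v = 1" using deg1_iff[OF sG] by blast
  qed
  have "degree_matrix (verts p q) G = degree_matrix (verts p q) (partial_transpose G)
     \<longleftrightarrow> (\<forall>v\<in>verts p q. degree (verts p q) (partial_transpose G) v = 1)"
    unfolding dm_eq using dG by auto
  also have "\<dots> \<longleftrightarrow> (\<forall>v\<in>verts p q. \<exists>!w. partial_transpose G v w)"
    using deg1_iff[OF sH] by blast
  also have "\<dots> \<longleftrightarrow> perfect_matching (verts p q) (partial_transpose G)"
    unfolding perfect_matching_def using sH by blast
  finally show ?thesis .
qed

theorem mainTheorem6:
  fixes p q :: nat and G :: graph
  assumes "even (p * q)"
    and "perfect_matching (verts p q) G"
  shows "(degree_matrix (verts p q) G = degree_matrix (verts p q) (partial_transpose G)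
            \<longleftrightarrow> perfect_matching (verts p q) (partial_transpose G))
       \<and> (degree_matrix (verts p q) G = degree_matrix (verts p q) (partial_transpose G)
            \<longrightarrow> non_isolated (verts p q) (entangled_part G)
                = non_isolated (verts p q) (entangled_part (partial_transpose G)))
       \<and> (perfect_entangling_matching (verts p q) G \<longrightarrow>
            (degree_matrix (verts p q) G = degree_matrix (verts p q) (partial_transpose G)
             \<longleftrightarrow> perfect_entangling_matching (verts p q) (partial_transpose G)))"
proof (intro conjI impI)
  let ?V = "verts p q" and ?H = "partial_transpose G"
  show P1: "degree_matrix ?V G = degree_matrix ?V ?H \<longleftrightarrow> perfect_matching ?V ?H"
    using part1[OF assms(2)] .
  {
    assume "degree_matrix ?V G = degree_matrix ?V ?H"
    hence pH: "perfect_matching ?V ?H" using P1 by blast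
    have symG: "G v w \<Longrightarrow> G w v" for v w
      using assms(2) unfolding perfect_matching_def simple_graph_def by blast
    have unent: "\<not> entangled v w \<Longrightarrow> G v w = ?H v w" for v w
      unfolding entangled_def partial_transpose_def using symG by (cases v; cases w) auto
    have key: "(\<exists>w. G v w \<and> entangled v w) \<longleftrightarrow> (\<exists>w. ?H v w \<and> entangled v w)"
      if v: "v \<in> ?V" for v
    proof -
      obtain a where a: "G v a" "\<And>b. G v b \<Longrightarrow> b = a"
        using assms(2) v unfolding perfect_matching_def by blast
      obtain c where c: "?H v c" "\<And>b. ?H v b \<Longrightarrow> b = c"
        using pH v unfolding perfect_matching_def by blast
      show ?thesis
      proof
        assume "\<exists>w. G v w \<and> entangled v w"
        hence ea: "entangled v a" using a by blast
        show "\<exists>w. ?H v w \<and> entangled v w"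
        proof (rule ccontr)
          assume "\<not> ?thesis"
          hence "\<not> entangled v c" using c by blast
          hence "G v c" using unent c by blast
          thus False using a ea \<open>\<not> entangled v c\<close> by blast
        qed
      next
        assume "\<exists>w. ?H v w \<and> entangled v w"
        hence ec: "entangled v c" using c by blast
        show "\<exists>w. G v w \<and> entangled v w"
        proof (rule ccontr)
          assume "\<not> ?thesis"
          hence "\<not> entangled v a" using a by blast
          hence "?H v a" using unent a by blast
          thus False using c ec \<open>\<not> entangled v a\<close> by blast
        qed
      qed
    qed
    show "non_isolated ?V (entangled_part G) = non_isolated ?V (entangled_part ?H)"
      unfolding non_isolated_def entangled_part_def using key by blast
  }
  assume pe: "perfect_entangling_matching ?V G"
  show "degree_matrix ?V G = degree_matrix ?V ?H \<longleftrightarrow> perfect_entangling_matching ?V ?H"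
  proof
    assume "degree_matrix ?V G = degree_matrix ?V ?H"
    hence pH: "perfect_matching ?V ?H" using P1 by blast
    have "\<forall>v w. ?H v w \<longrightarrow> entangled v w"
    proof (intro allI impI)
      fix v w assume h: "?H v w"
      obtain i j k l where vw: "v = (i,j)" "w = (k,l)" by (cases v; cases w) auto
      have "G (i,l) (k,j)" using h vw unfolding partial_transpose_def by simp
      hence "entangled (i,l) (k,j)" using pe unfolding perfect_entangling_matching_def by blast
      thus "entangled v w" using vw unfolding entangled_def by auto
    qed
    thus "perfect_entangling_matching ?V ?H" using pH unfolding perfect_entangling_matching_def by blast
  next
    assume "perfect_entangling_matching ?V ?H"
    thus "degree_matrix ?V G = degree_matrix ?V ?H" using P1 unfolding perfect_entangling_matching_def by blast
  qed
qed

end
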